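(* Assume the setting below (the iteration (a)–(c)), and assume that every Moore–Penrose pseudoinverse and every denominator occurring in the iteration is well defined, i.e. $\sum_{i=1}^n (W_{k})_{ij}>0$ for all $j$. Then each iteration does not increase the objective: $$L(V_{k+1},U_{k+1},\mu_{k+1})\le L(V_k,U_k,\mu_k)\qquad\text{for all }k\ge 0 .$$
   Context: Setting. Let $X=(x_{ij})$ be an $n\times p$ real matrix and $M=(m_{ij})\in\{0,1\}^{n\times p}$ a missingness indicator ($m_{ij}=0$ means $x_{ij}$ is missing; its numerical value is then arbitrary and irrelevant). Put $m_i=\sum_j m_{ij}$, assumed $\ge 1$ for every $i$, and $m=\sum_i m_i$. Fix constants $\hat\sigma_{1,j}>0$ ($j=1,\dots,p$), $\hat\sigma_2>0$ and an integer $1\le q<p$. For $0<b<c$ and $q_1,q_2>0$ with $q_1\tanh(q_2(c-b))=b$, let $d=b^2/2+(q_1/q_2)\ln\cosh(q_2(c-b))$ and define $\rho_{b,c}(z)=z^2/2$ if $|z|\le b$, $\rho_{b,c}(z)=d-(q_1/q_2)\ln\cosh(q_2(c-|z|))$ if $b\le|z|\le c$, $\rho_{b,c}(z)=d$ if $|z|\ge c$; its derivative is $\psi_{b,c}(z)=z$ for $|z|\le b$, $q_1\tanh(q_2(c-|z|))\,\mathrm{sign}(z)$ for $b\le |z|\le c$, $0$ for $|z|\ge c$. Let $\rho_1=\rho_{b_1,c_1}$ and $\rho_2=\rho_{b_2,c_2}$ be two such functions (each with its own admissible constants), $\psi_k=\rho_k'$, and weight functions $w_k(z)=\psi_k(z)/z$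 for $z\neq0$, $w_k(0)=1$. For $V\in\mathbb R^{p\times q}$ with rows $v_1^T,\dots,v_p^T$, $U\in\mathbb R^{n\times q}$ with rows $u_1^T,\dots,u_n^T$, and $\mu\in\mathbb R^p$, set $\hat x_{ij}=\mu_j+u_i^Tv_j$, $r_{ij}=x_{ij}-\hat x_{ij}$, $\mathrm{rt}_i=\sqrt{\frac1{m_i}\sum_j m_{ij}\hat\sigma_{1,j}^2\rho_1(r_{ij}/\hat\sigma_{1,j})}$ and the objective $$L(V,U,\mu)=\frac{\hat\sigma_2^2}{m}\sum_{i=1}^n m_i\,\rho_2(\mathrm{rt}_i/\hat\sigma_2).$$ Cellwise weights $w^c_{ij}=w_1(r_{ij}/\hat\sigma_{1,j})$, rowwise weights $w^r_i=w_2(\mathrm{rt}_i/\hat\sigma_2)$, and $W(V,U,\mu)=(w_{ij})$ with $w_{ij}=w^c_{ij}w^r_im_{ij}$; also $\widetilde W(V,U,\mu)=(w^c_{ij}m_{ij})$. For a nonnegative $n\times p$ matrix $W$ the weighted objective is $\widetilde L_W(V,U,\mu)=\sum_{i,j}w_{ij}(x_{ij}-\mu_j-u_i^Tv_j)^2$. For an $n\times p$ matrix $A$, $A^j$ denotes the $n\times n$ diagonal matrix with the $j$-th column of $A$ on the diagonal and $A_i$ the $p\times p$ diagonal matrix with the $i$-th row of $A$ on the diagonal; $x^j$ is the $j$-th column and $x_i$ the $i$-th row (as column vector) of $X$; ${}^\dagger$ is the Moore–Penrose inverse. Iteration. Start from any $(V_0,U_0,\mu_0)$. Given $(V_k,U_k,\mu_k)$,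 let $W_k=W(V_k,U_k,\mu_k)$, $\widetilde W_k=\widetilde W(V_k,U_k,\mu_k)$ and (a) for each $j$, the $j$-th row of $V_{k+1}$ is $\big(U_k^TW_k^jU_k\big)^\dagger U_k^TW_k^j\big(x^j-(\mu_k)_j1_n\big)$; (b) for each $i$, the $i$-th row of $U_{k+1}$ is $\big(V_{k+1}^T(\widetilde W_k)_iV_{k+1}\big)^\dagger V_{k+1}^T(\widetilde W_k)_i(x_i-\mu_k)$; (c) for each $j$, $(\mu_{k+1})_j=\dfrac{\sum_i (W_k)_{ij}\big(x_{ij}-(U_{k+1}V_{k+1}^T)_{ij}\big)}{\sum_i (W_k)_{ij}}$. *)

theory Defs
  imports "HOL-Analysis.Analysis"
begin

definition pinv :: "real^'n^'m \<Rightarrow> real^'m^'n" where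
  "pinv A = (THE G. A ** G ** A = A \<and> G ** A ** G = G \<and>
                    transpose (A ** G) = A ** G \<and> transpose (G ** A) = G ** A)"

definition diagm :: "real^'n \<Rightarrow> real^'n^'n" where
  "diagm v = (\<chi> i j. if i = j then v $ i else 0)"

definition rho_adm :: "real \<times> real \<times> real \<times> real \<Rightarrow> bool" where
  "rho_adm P = (case P of (b, c, q1, q2) \<Rightarrow>
      0 < b \<and> b < c \<and> 0 < q1 \<and> 0 < q2 \<and> q1 * tanh (q2 * (c - b)) = b)"

definition rho_fn :: "real \<times> real \<times> real \<times> real \<Rightarrow> real \<Rightarrow> real" where
  "rho_fn P z = (case P of (b, c, q1, q2) \<Rightarrow>
      (let d = b\<^sup>2 / 2 + (q1 / q2) * ln (cosh (q2 * (c - b))) in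
       if \<bar>z\<bar> \<le> b then z\<^sup>2 / 2
       else if \<bar>z\<bar> \<le> c then d - (q1 / q2) * ln (cosh (q2 * (c - \<bar>z\<bar>)))
       else d))"

definition psi_fn :: "real \<times> real \<times> real \<times> real \<Rightarrow> real \<Rightarrow> real" where
  "psi_fn P z = (case P of (b, c, q1, q2) \<Rightarrow>
       if \<bar>z\<bar> \<le> b then z
       else if \<bar>z\<bar> \<le> c then q1 * tanh (q2 * (c - \<bar>z\<bar>)) * sgn z
       else 0)"

definition w_fn :: "real \<times> real \<times> real \<times> real \<Rightarrow> real \<Rightarrow> real" where
  "w_fn P z = (if z = 0 then 1 else psi_fn P z / z)"

text \<open>Missingness indicator m_ij as 0/1 real; M$i$j = True means observed.\<close>
definition mind :: "bool^'p^'n \<Rightarrow> 'n \<Rightarrow> 'p \<Rightarrow> real" where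
  "mind M i j = (if M $ i $ j then 1 else 0)"

definition mrow :: "bool^'p^'n \<Rightarrow> 'n \<Rightarrow> real" where
  "mrow M i = (\<Sum>j\<in>UNIV. mind M i j)"

definition mtot :: "bool^'p^'n \<Rightarrow> real" where
  "mtot M = (\<Sum>i\<in>UNIV. mrow M i)"

definition resid :: "real^'p^'n \<Rightarrow> real^'q^'p \<Rightarrow> real^'q^'n \<Rightarrow> real^'p \<Rightarrow> 'n \<Rightarrow> 'p \<Rightarrow> real" where
  "resid X V U mu i j = X $ i $ j - (mu $ j + (U $ i) \<bullet> (V $ j))"

definition rt :: "real \<times> real \<times> real \<times> real \<Rightarrow> real^'p \<Rightarrow> real^'p^'n \<Rightarrow> bool^'p^'n
                   \<Rightarrow> real^'q^'p \<Rightarrow> real^'q^'n \<Rightarrow> real^'p \<Rightarrow> 'n \<Rightarrow> real" where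
  "rt P1 s1 X M V U mu i = sqrt ((1 / mrow M i) *
      (\<Sum>j\<in>UNIV. mind M i j * (s1 $ j)\<^sup>2 * rho_fn P1 (resid X V U mu i j / s1 $ j)))"

definition objL :: "real \<times> real \<times> real \<times> real \<Rightarrow> real \<times> real \<times> real \<times> real \<Rightarrow> real^'p \<Rightarrow> real
                   \<Rightarrow> real^'p^'n \<Rightarrow> bool^'p^'n \<Rightarrow> real^'q^'p \<Rightarrow> real^'q^'n \<Rightarrow> real^'p \<Rightarrow> real" where
  "objL P1 P2 s1 s2 X M V U mu = s2\<^sup>2 / mtot M *
      (\<Sum>i\<in>UNIV. mrow M i * rho_fn P2 (rt P1 s1 X M V U mu i / s2))"

definition Wmat :: "real \<times> real \<times> real \<times> real \<Rightarrow> real \<times> real \<times> real \<times> real \<Rightarrow> real^'p \<Rightarrow> real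
                   \<Rightarrow> real^'p^'n \<Rightarrow> bool^'p^'n \<Rightarrow> real^'q^'p \<Rightarrow> real^'q^'n \<Rightarrow> real^'p \<Rightarrow> real^'p^'n" where
  "Wmat P1 P2 s1 s2 X M V U mu = (\<chi> i j.
      w_fn P1 (resid X V U mu i j / s1 $ j) * w_fn P2 (rt P1 s1 X M V U mu i / s2) * mind M i j)"

definition Wtmat :: "real \<times> real \<times> real \<times> real \<Rightarrow> real^'p
                   \<Rightarrow> real^'p^'n \<Rightarrow> bool^'p^'n \<Rightarrow> real^'q^'p \<Rightarrow> real^'q^'n \<Rightarrow> real^'p \<Rightarrow> real^'p^'n" where
  "Wtmat P1 s1 X M V U mu = (\<chi> i j. w_fn P1 (resid X V U mu i j / s1 $ j) * mind M i j)"

definition step :: "real \<times> real \<times> real \<times> real \<Rightarrow> real \<times> real \<times> real \<times> real \<Rightarrow> real^'p \<Rightarrow> real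
      \<Rightarrow> real^'p^'n \<Rightarrow> bool^'p^'n
      \<Rightarrow> ((real^'q^'p) \<times> (real^'q^'n) \<times> (real^'p)) \<Rightarrow> ((real^'q^'p) \<times> (real^'q^'n) \<times> (real^'p))" where
  "step P1 P2 s1 s2 X M S =
     (let V = fst S; U = fst (snd S); mu = snd (snd S);
          W = Wmat P1 P2 s1 s2 X M V U mu;
          Wt = Wtmat P1 s1 X M V U mu;
          V' = (\<chi> j. pinv (transpose U ** diagm (column j W) ** U)
                    *v (transpose U *v (diagm (column j W) *v (column j X - vec (mu $ j)))));
          U' = (\<chi> i. pinv (transpose V' ** diagm (Wt $ i) ** V')
                    *v (transpose V' *v (diagm (Wt $ i) *v (X $ i - mu))));
          mu' = (\<chi> j. (\<Sum>i\<in>UNIV. W $ i $ j * (X $ i $ j - (U' ** transpose V') $ i $ j))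
                      / (\<Sum>i\<in>UNIV. W $ i $ j))
      in (V', U', mu'))"

definition iterate :: "real \<times> real \<times> real \<times> real \<Rightarrow> real \<times> real \<times> real \<times> real \<Rightarrow> real^'p \<Rightarrow> real
      \<Rightarrow> real^'p^'n \<Rightarrow> bool^'p^'n
      \<Rightarrow> ((real^'q^'p) \<times> (real^'q^'n) \<times> (real^'p)) \<Rightarrow> nat \<Rightarrow> ((real^'q^'p) \<times> (real^'q^'n) \<times> (real^'p))" where
  "iterate P1 P2 s1 s2 X M S0 k = (step P1 P2 s1 s2 X M ^^ k) S0"

end

theory Submission
  imports Defs
begin


lemma rho_abs: "rho_fn P \<bar>z\<bar> = rho_fn P z"
  by (cases P) (simp add: rho_fn_def Let_def)

lemma w_abs: "w_fn P \<bar>z\<bar> = w_fn P z"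
  by (cases P) (auto simp add: w_fn_def psi_fn_def abs_if sgn_if)

lemma w_pos:
  assumes "P = (b,c,q1,q2)" "t > 0"
  shows "w_fn P t = (if t \<le> b then 1 else if t \<le> c then q1*tanh(q2*(c-t))/t else 0)"
  using assms by (auto simp: w_fn_def psi_fn_def)

lemma w_zero: "w_fn P 0 = 1" by (simp add: w_fn_def)

lemma w_mono:
  assumes "rho_adm P" "0 \<le> x" "x \<le> y"
  shows "w_fn P y \<le> w_fn P x"
proof -
  obtain b c q1 q2 where P: "P = (b,c,q1,q2)" by (cases P) auto
  have adm: "0 < b" "b < c" "0 < q1" "0 < q2" "q1 * tanh (q2 * (c - b)) = b"
    using assms(1) by (auto simp: rho_adm_def P)
  define g where "g t = q1*tanh(q2*(c-t))/t" for t
  have gle: "g t \<le> 1" if "b < t" "t \<le> c" for t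
  proof -
    have "q1*tanh(q2*(c-t)) \<le> q1*tanh(q2*(c-b))"
      using adm that by (intro mult_left_mono) (auto intro: mult_left_mono)
    then show ?thesis using adm that by (simp add: g_def)
  qed
  have gge: "0 \<le> g t" if "b < t" "t \<le> c" for t
    using adm that by (simp add: g_def)
  have gmono: "g y' \<le> g x'" if "b < x'" "x' \<le> y'" "y' \<le> c" for x' y'
  proof -
    have "q1*tanh(q2*(c-y')) \<le> q1*tanh(q2*(c-x'))"
      using adm that by (intro mult_left_mono) (auto intro: mult_left_mono)
    moreover have "0 \<le> q1*tanh(q2*(c-y'))" using adm that by simp
    ultimately show ?thesis unfolding g_def
      using adm that by (intro frac_le) auto
  qed
  have wx: "w_fn P t = (if t \<le> b then 1 else if t \<le> c then g t else 0)" if "t \<ge> 0" for t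
  proof (cases "t = 0")
    case True then show ?thesis using adm by (simp add: w_zero)
  next
    case False then show ?thesis using w_pos[OF P] that by (simp add: g_def)
  qed
  show ?thesis
    using assms(2,3) gle gge gmono adm unfolding wx[OF assms(2)] wx[of y, OF order.trans[OF assms(2,3)]]
    by (smt (verit))
qed

lemma w_nonneg:
  assumes "rho_adm P"
  shows "0 \<le> w_fn P z"
proof -
  obtain b c q1 q2 where P: "P = (b,c,q1,q2)" by (cases P) auto
  have adm: "0 < b" "b < c" "0 < q1" "0 < q2"
    using assms(1) by (auto simp: rho_adm_def P)
  have "0 \<le> w_fn P \<bar>z\<bar>"
  proof (cases "z = 0")
    case True then show ?thesis by (simp add: w_zero)
  next
    case False then show ?thesis using w_pos[OF P, of "\<bar>z\<bar>"] adm by auto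
  qed
  then show ?thesis by (simp add: w_abs)
qed



lemma mono_exc1:
  fixes f :: "real \<Rightarrow> real"
  assumes "a \<le> x" "continuous_on {a..x} f"
    and "\<And>t. a < t \<Longrightarrow> t < x \<Longrightarrow> t \<noteq> p \<Longrightarrow> (\<exists>y. DERIV f t :> y \<and> y \<ge> 0)"
  shows "f a \<le> f x"
proof (cases "a < p \<and> p < x")
  case True
  have "f a \<le> f p"
    by (rule DERIV_nonneg_imp_increasing_open) (use True assms in \<open>auto intro: continuous_on_subset\<close>)
  moreover have "f p \<le> f x"
    by (rule DERIV_nonneg_imp_increasing_open) (use True assms in \<open>auto intro: continuous_on_subset\<close>)
  ultimately show ?thesis by simp
next
  case False
  show ?thesis
    by (rule DERIV_nonneg_imp_increasing_open) (use False assms in \<open>auto\<close>)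
qed

lemma mono_exc2:
  fixes f :: "real \<Rightarrow> real"
  assumes "a \<le> x" "continuous_on {a..x} f"
    and "\<And>t. a < t \<Longrightarrow> t < x \<Longrightarrow> t \<noteq> p \<Longrightarrow> t \<noteq> q \<Longrightarrow> (\<exists>y. DERIV f t :> y \<and> y \<ge> 0)"
  shows "f a \<le> f x"
proof (cases "a < q \<and> q < x")
  case True
  have "f a \<le> f q"
    by (rule mono_exc1[where p=p]) (use True assms in \<open>auto intro: continuous_on_subset\<close>)
  moreover have "f q \<le> f x"
    by (rule mono_exc1[where p=p]) (use True assms in \<open>auto intro: continuous_on_subset\<close>)
  ultimately show ?thesis by simp
next
  case False
  show ?thesis
    by (rule mono_exc1[where p=p]) (use False assms in \<open>auto\<close>)
qed

lemma rho_nonneg: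
  assumes "rho_adm P"
  shows "0 \<le> rho_fn P z"
proof -
  obtain b c q1 q2 where P: "P = (b,c,q1,q2)" by (cases P) auto
  have adm: "0 < b" "b < c" "0 < q1" "0 < q2"
    using assms(1) by (auto simp: rho_adm_def P)
  define d where "d = b\<^sup>2 / 2 + (q1 / q2) * ln (cosh (q2 * (c - b)))"
  have l0: "0 \<le> ln (cosh (q2 * (c - b)))" by (simp add: cosh_real_ge_1)
  have d0: "0 \<le> d" unfolding d_def using adm l0 by (intro add_nonneg_nonneg) auto
  have mid: "0 \<le> d - (q1 / q2) * ln (cosh (q2 * (c - \<bar>z\<bar>)))" if "b < \<bar>z\<bar>" "\<bar>z\<bar> \<le> c"
  proof -
    have "cosh (q2 * (c - \<bar>z\<bar>)) \<le> cosh (q2 * (c - b))"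
      using that adm by (subst cosh_real_nonneg_le_iff) (auto intro: mult_left_mono)
    then have "ln (cosh (q2 * (c - \<bar>z\<bar>))) \<le> ln (cosh (q2 * (c - b)))" by (simp add: cosh_real_pos)
    then have "(q1 / q2) * ln (cosh (q2 * (c - \<bar>z\<bar>))) \<le> (q1 / q2) * ln (cosh (q2 * (c - b)))"
      using adm by (intro mult_left_mono) auto
    then show ?thesis unfolding d_def using zero_le_power2[of b] by linarith
  qed
  show ?thesis
    using mid d0 unfolding d_def by (auto simp: rho_fn_def P Let_def)
qed



lemma tangent_pos:
  assumes adm: "rho_adm P" and t0: "0 \<le> t0" and t: "0 \<le> t"
  shows "rho_fn P t \<le> rho_fn P t0 + w_fn P t0 / 2 * (t\<^sup>2 - t0\<^sup>2)"
proof -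
  obtain b c q1 q2 where P: "P = (b,c,q1,q2)" by (cases P) auto
  have a: "0 < b" "b < c" "0 < q1" "0 < q2" "q1 * tanh (q2 * (c - b)) = b"
    using adm by (auto simp: rho_adm_def P)
  define d where "d = b\<^sup>2 / 2 + (q1 / q2) * ln (cosh (q2 * (c - b)))"
  define f2 where "f2 t = d - (q1 / q2) * ln (cosh (q2 * (c - t)))" for t
  define h where "h t = (if t \<le> b then t\<^sup>2/2 else if t \<le> c then f2 t else d)" for t
  have rh: "rho_fn P z = h \<bar>z\<bar>" for z
    by (simp add: rho_fn_def P h_def f2_def d_def Let_def)
  have f2b: "f2 b = b\<^sup>2/2" by (simp add: f2_def d_def)
  have f2c: "f2 c = d" by (simp add: f2_def)
  have cf2: "continuous_on S f2" for S
    unfolding f2_def by (intro continuous_intros) (auto simp: cosh_real_pos)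
  have ch: "continuous_on UNIV h"
    unfolding h_def
    by (intro continuous_on_cases_le cf2 continuous_intros) (use a in \<open>auto simp: f2b f2c\<close>)
  have dpsi: "DERIV h t :> t * w_fn P t" if "0 < t" "t \<noteq> b" "t \<noteq> c" for t
  proof -
    have "t < b \<or> (b < t \<and> t < c) \<or> c < t" using that by (auto simp: neq_iff)
    then consider "t < b" | "b < t" "t < c" | "c < t" by blast
    then show ?thesis
    proof cases
      case 1
      have "DERIV (\<lambda>t. t\<^sup>2/2) t :> t" by (auto intro!: derivative_eq_intros)
      then have "DERIV h t :> t"
        by (rule has_field_derivative_transform_within_open[where S="{..<b}"])
           (use 1 in \<open>auto simp: h_def\<close>)
      then show ?thesis using 1 that w_pos[OF P that(1)] by simp
    next
      case 2
      have "DERIV f2 t :> q1 * tanh (q2 * (c - t))"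
        unfolding f2_def using a
        by (auto intro!: derivative_eq_intros simp: cosh_real_pos tanh_def field_simps)
      then have "DERIV h t :> q1 * tanh (q2 * (c - t))"
        by (rule has_field_derivative_transform_within_open[where S="{b<..<c}"])
           (use 2 in \<open>auto simp: h_def\<close>)
      then show ?thesis using 2 that w_pos[OF P that(1)] by simp
    next
      case 3
      have "DERIV (\<lambda>_. d) t :> 0" by (auto intro!: derivative_eq_intros)
      then have "DERIV h t :> 0"
        by (rule has_field_derivative_transform_within_open[where S="{c<..}"])
           (use 3 a in \<open>auto simp: h_def\<close>)
      then show ?thesis using 3 a that w_pos[OF P that(1)] by simp
    qed
  qed
  define w0 where "w0 = w_fn P t0"
  define F where "F t = h t0 + w0/2 * (t\<^sup>2 - t0\<^sup>2) - h t" for t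
  have cF: "continuous_on S F" for S
    unfolding F_def by (intro continuous_intros continuous_on_subset[OF ch]) auto
  have dF: "DERIV F s :> s * (w0 - w_fn P s)" if "0 < s" "s \<noteq> b" "s \<noteq> c" for s
    unfolding F_def using dpsi[OF that]
    by (auto intro!: derivative_eq_intros simp: algebra_simps)
  have "0 \<le> F t"
  proof (cases "t0 \<le> t")
    case True
    have "F t0 \<le> F t"
    proof (rule mono_exc2[where p=b and q=c and f=F])
      fix s assume s: "t0 < s" "s < t" "s \<noteq> b" "s \<noteq> c"
      have "w_fn P s \<le> w0" unfolding w0_def using w_mono[OF adm t0] s by simp
      then show "\<exists>y. DERIV F s :> y \<and> 0 \<le> y"
        using dF[of s] s t0 by (intro exI[of _ "s * (w0 - w_fn P s)"]) auto
    qed (use True cF in auto)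
    then show ?thesis by (simp add: F_def)
  next
    case False
    have "(\<lambda>s. - F s) t \<le> (\<lambda>s. - F s) t0"
    proof (rule mono_exc2[where p=b and q=c and f="\<lambda>s. - F s"])
      fix s assume s: "t < s" "s < t0" "s \<noteq> b" "s \<noteq> c"
      have "w0 \<le> w_fn P s" unfolding w0_def using w_mono[OF adm, of s t0] s t by simp
      then show "\<exists>y. DERIV (\<lambda>s. - F s) s :> y \<and> 0 \<le> y"
        using dF[of s] s t by (intro exI[of _ "- (s * (w0 - w_fn P s))"])
          (auto intro!: derivative_eq_intros mult_nonneg_nonpos)
    qed (use False cF in \<open>auto intro: continuous_intros\<close>)
    then show ?thesis by (simp add: F_def)
  qed
  then show ?thesis using t t0 rh[of t] rh[of t0] by (simp add: F_def w0_def)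
qed

lemma tangent:
  assumes adm: "rho_adm P"
  shows "rho_fn P z \<le> rho_fn P z0 + w_fn P z0 / 2 * (z\<^sup>2 - z0\<^sup>2)"
  using tangent_pos[OF adm, of "\<bar>z0\<bar>" "\<bar>z\<bar>"]
  by (simp add: rho_abs w_abs)



lemma dot_mv_transpose: "(M *v x) \<bullet> y = x \<bullet> (transpose M *v y)"
  for M :: "real^'n^'m"
proof -
  have "(M *v x) \<bullet> y = (\<Sum>i\<in>UNIV. \<Sum>j\<in>UNIV. M $ i $ j * x $ j * y $ i)"
    by (simp add: inner_vec_def matrix_vector_mult_def sum_distrib_right)
  also have "\<dots> = (\<Sum>j\<in>UNIV. \<Sum>i\<in>UNIV. M $ i $ j * x $ j * y $ i)"
    by (rule sum.swap)
  also have "\<dots> = x \<bullet> (transpose M *v y)"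
    by (simp add: inner_vec_def matrix_vector_mult_def transpose_def sum_distrib_left mult_ac)
  finally show ?thesis .
qed


lemma transpose_eqI:
  fixes M :: "real^'n^'n"
  assumes "\<And>x y. (M *v x) \<bullet> y = x \<bullet> (M *v y)"
  shows "transpose M = M"
proof -
  have "transpose M *v x = M *v x" for x
  proof -
    have h: "(transpose M *v x) \<bullet> y = (M *v x) \<bullet> y" for y
      using dot_mv_transpose[of "transpose M" x y] assms[of x y] by (simp add: transpose_transpose)
    have "(transpose M *v x - M *v x) \<bullet> (transpose M *v x - M *v x) = 0"
      by (simp only: inner_diff_left h diff_self)
    then show ?thesis by simp
  qed
  then show ?thesis by (simp add: matrix_eq)
qed

lemma penrose_unique:
  fixes A :: "real^'n^'m" and G1 G2 :: "real^'m^'n"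
  assumes 1: "A ** G1 ** A = A" "G1 ** A ** G1 = G1"
            "transpose (A ** G1) = A ** G1" "transpose (G1 ** A) = G1 ** A"
  assumes 2: "A ** G2 ** A = A" "G2 ** A ** G2 = G2"
            "transpose (A ** G2) = A ** G2" "transpose (G2 ** A) = G2 ** A"
  shows "G1 = G2"
proof -
  have e1: "G1 = G1 ** A ** G2"
  proof -
    have "G1 = G1 ** (A ** G1)" using 1(2) by (simp add: matrix_mul_assoc)
    also have "\<dots> = G1 ** transpose (A ** G1)" using 1(3) by simp
    also have "\<dots> = G1 ** transpose G1 ** transpose A"
      by (simp add: matrix_transpose_mul matrix_mul_assoc)
    also have "transpose A = transpose (A ** G2 ** A)" using 2(1) by simp
    also have "\<dots> = transpose A ** transpose (A ** G2)"
      by (simp add: matrix_transpose_mul matrix_mul_assoc)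
    also have "G1 ** transpose G1 ** (transpose A ** transpose (A ** G2))
       = G1 ** transpose (A ** G1) ** transpose (A ** G2)"
      by (simp add: matrix_transpose_mul matrix_mul_assoc)
    also have "\<dots> = G1 ** A ** G1 ** A ** G2" using 1(3) 2(3) by (simp add: matrix_mul_assoc)
    also have "\<dots> = G1 ** A ** G2" using 1(2) by simp
    finally show ?thesis .
  qed
  have e2: "G2 = G1 ** A ** G2"
  proof -
    have "G2 = (G2 ** A) ** G2" using 2(2) by simp
    also have "\<dots> = transpose (G2 ** A) ** G2" using 2(4) by simp
    also have "\<dots> = transpose A ** transpose G2 ** G2"
      by (simp add: matrix_transpose_mul)
    also have "transpose A = transpose (A ** G1 ** A)" using 1(1) by simp
    also have "\<dots> = transpose (G1 ** A) ** transpose A"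
      by (simp add: matrix_transpose_mul matrix_mul_assoc)
    also have "transpose (G1 ** A) ** transpose A ** transpose G2 ** G2
       = transpose (G1 ** A) ** transpose (G2 ** A) ** G2"
      by (simp add: matrix_transpose_mul matrix_mul_assoc)
    also have "\<dots> = G1 ** A ** (G2 ** A ** G2)" using 1(4) 2(4) by (simp add: matrix_mul_assoc)
    also have "\<dots> = G1 ** A ** G2" using 2(2) by simp
    finally show ?thesis .
  qed
  show ?thesis using e1 e2 by simp
qed



lemma sym_dot:
  fixes A :: "real^'n^'n"
  assumes "transpose A = A"
  shows "(A *v x) \<bullet> y = x \<bullet> (A *v y)"
  using dot_mv_transpose[of A x y] assms by simp

lemma penrose_exists:
  fixes A :: "real^'n^'n"
  assumes sym: "transpose A = A"
  shows "\<exists>G. A ** G ** A = A \<and> G ** A ** G = G \<and>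
             transpose (A ** G) = A ** G \<and> transpose (G ** A) = G ** A"
proof -
  define R where "R = range (\<lambda>x. A *v x)"
  have sub: "subspace R" unfolding R_def subspace_def
  proof (intro conjI ballI allI)
    show "0 \<in> range ((*v) A)" by (rule image_eqI[of _ _ 0]) auto
  next
    fix x y assume "x \<in> range ((*v) A)" "y \<in> range ((*v) A)"
    then obtain u v where "x = A *v u" "y = A *v v" by auto
    then show "x + y \<in> range ((*v) A)"
      by (intro image_eqI[of _ _ "u + v"]) (auto simp: matrix_vector_right_distrib)
  next
    fix c :: real and x assume "x \<in> range ((*v) A)"
    then obtain u where "x = A *v u" by auto
    then show "c *\<^sub>R x \<in> range ((*v) A)"
      by (intro image_eqI[of _ _ "c *\<^sub>R u"]) (auto simp: matrix_vector_mult_scaleR)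
  qed
  have spanR: "span R = R" using sub by (simp add: span_eq_iff)
  have inR: "A *v x \<in> R" for x unfolding R_def by auto
  have kerA: "A *v z = 0" if "\<forall>w\<in>R. z \<bullet> w = 0" for z
  proof -
    have "(A *v z) \<bullet> (A *v z) = z \<bullet> (A *v (A *v z))" by (rule sym_dot[OF sym])
    also have "\<dots> = 0" using that inR by blast
    finally show ?thesis by simp
  qed
  have ex: "\<exists>y. y \<in> R \<and> (\<forall>w\<in>R. (x - y) \<bullet> w = 0)" for x
  proof -
    obtain y z where "y \<in> span R" "\<And>w. w \<in> span R \<Longrightarrow> orthogonal z w" "x = y + z"
      using orthogonal_subspace_decomp_exists by blast
    then show ?thesis using spanR by (intro exI[of _ y]) (auto simp: orthogonal_def)
  qed
  define p where "p x = (SOME y. y \<in> R \<and> (\<forall>w\<in>R. (x - y) \<bullet> w = 0))" for x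
  have pP1: "p z \<in> R" for z
    using someI_ex[OF ex[of z]] unfolding p_def[symmetric] by auto
  have pP2: "(z - p z) \<bullet> t = 0" if "t \<in> R" for z t
    using someI_ex[OF ex[of z]] that unfolding p_def[symmetric] by auto
  have pU: "p x = y" if "y \<in> R" "\<And>w. w \<in> R \<Longrightarrow> (x - y) \<bullet> w = 0" for x y
  proof -
    have d: "p x - y \<in> R" using pP1 that(1) sub by (simp add: subspace_diff)
    have "(p x - y) \<bullet> (p x - y) = (x - y) \<bullet> (p x - y) - (x - p x) \<bullet> (p x - y)"
      by (simp add: inner_diff_left)
    also have "\<dots> = 0" using that(2)[OF d] pP2[OF d] by simp
    finally show ?thesis by simp
  qed
  have pR: "p y = y" if "y \<in> R" for y using pU[OF that] by simp
  have Ap: "A *v (x - p x) = 0" for x using kerA pP2 by blast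
  have Ap2: "A *v p x = A *v x" for x using Ap[of x] by (simp add: matrix_vector_mult_diff_distrib)
  have plin: "linear p"
  proof
    fix x y show "p (x + y) = p x + p y"
    proof (rule pU)
      show "p x + p y \<in> R" using pP1 pP2 sub by (simp add: subspace_add)
      fix w assume "w \<in> R"
      then show "(x + y - (p x + p y)) \<bullet> w = 0"
        using pP2[where z=x and t=w] pP2[where z=y and t=w]
        by (simp add: algebra_simps inner_diff_left inner_add_left)
    qed
  next
    fix c :: real and x show "p (c *\<^sub>R x) = c *\<^sub>R p x"
    proof (rule pU)
      show "c *\<^sub>R p x \<in> R" using pP1 pP2 sub by (simp add: subspace_scale)
      fix w assume "w \<in> R"
      then show "(c *\<^sub>R x - c *\<^sub>R p x) \<bullet> w = 0"
        using pP2[where z=x and t=w] by (simp add: algebra_simps inner_diff_left)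
    qed
  qed
  have psym: "p x \<bullet> y = x \<bullet> p y" for x y
  proof -
    have "p x \<bullet> y = p x \<bullet> p y + p x \<bullet> (y - p y)" by (simp add: inner_diff_right)
    also have "p x \<bullet> (y - p y) = 0" using pP2[where z=y and t="p x"] pP1[of x] by (simp add: inner_commute)
    moreover have "x \<bullet> p y = p x \<bullet> p y + (x - p x) \<bullet> p y" by (simp add: inner_diff_left)
    moreover have "(x - p x) \<bullet> p y = 0" using pP1 pP2 by blast
    ultimately show ?thesis by simp
  qed
  have gex: "\<exists>v. v \<in> R \<and> A *v v = p x" for x
  proof -
    obtain u where u: "p x = A *v u" using pP1[of x] unfolding R_def by auto
    show ?thesis using pP1[of u] Ap2[of u] u by (intro exI[of _ "p u"]) simp
  qed
  have gU: "v = v'" if "v \<in> R" "v' \<in> R" "A *v v = A *v v'" for v v'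
  proof -
    have d: "v - v' \<in> R" using that sub by (simp add: subspace_diff)
    have "A *v (v - v') = 0" using that(3) by (simp add: matrix_vector_mult_diff_distrib)
    then have "(v - v') \<bullet> (A *v u) = 0" for u using sym_dot[OF sym, of "v - v'" u] by simp
    moreover obtain u where "v - v' = A *v u" using d unfolding R_def by auto
    ultimately have "(v - v') \<bullet> (v - v') = 0" by metis
    then show ?thesis by simp
  qed
  define g where "g x = (SOME v. v \<in> R \<and> A *v v = p x)" for x
  have gP: "g x \<in> R" "A *v g x = p x" for x
    using someI_ex[OF gex[of x]] unfolding g_def[symmetric] by auto
  have gI: "g x = v" if "v \<in> R" "A *v v = p x" for x v
    using gU[OF gP(1) that(1)] gP(2) that(2) by simp
  have glin: "linear g"
  proof
    fix x y show "g (x + y) = g x + g y"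
      by (rule gI) (use gP sub linear_add[OF plin] in \<open>auto simp: subspace_add matrix_vector_right_distrib\<close>)
  next
    fix c :: real and x show "g (c *\<^sub>R x) = c *\<^sub>R g x"
      by (rule gI) (use gP sub linear_scale[OF plin] in \<open>auto simp: subspace_scale matrix_vector_mult_scaleR\<close>)
  qed
  define G where "G = matrix g"
  have Gv: "G *v x = g x" for x unfolding G_def using glin by (simp add: matrix_vector_mul(2))
  have AG: "(A ** G) *v x = p x" for x by (simp add: matrix_vector_mul_assoc[symmetric] Gv gP)
  have GA: "(G ** A) *v x = p x" for x
  proof -
    have "g (A *v x) = p x" by (rule gI) (use pP1 pP2 Ap2 pR inR in auto)
    then show ?thesis by (simp add: matrix_vector_mul_assoc[symmetric] Gv)
  qed
  have 1: "A ** G ** A = A"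
    by (simp add: matrix_eq matrix_vector_mul_assoc[symmetric] AG[simplified matrix_vector_mul_assoc[symmetric]] pR inR)
  have 2: "G ** A ** G = G"
  proof -
    have "g (A *v g x) = g x" for x using gP pP1 by (intro gI) (auto simp: pR)
    then show ?thesis by (simp add: matrix_eq matrix_vector_mul_assoc[symmetric] Gv)
  qed
  have 3: "transpose (A ** G) = A ** G" by (rule transpose_eqI) (simp add: AG psym)
  have 4: "transpose (G ** A) = G ** A" by (rule transpose_eqI) (simp add: GA psym)
  show ?thesis using 1 2 3 4 by blast
qed

lemma pinv_props:
  fixes A :: "real^'n^'n"
  assumes sym: "transpose A = A"
  shows "A ** pinv A ** A = A \<and> pinv A ** A ** pinv A = pinv A \<and>
         transpose (A ** pinv A) = A ** pinv A \<and> transpose (pinv A ** A) = pinv A ** A"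
  unfolding pinv_def
  by (rule theI') (use penrose_exists[OF sym] penrose_unique in blast)



lemma diagm_mv: "(diagm w *v v) $ i = w $ i * v $ i"
proof -
  have "(diagm w *v v) $ i = (\<Sum>j\<in>UNIV. (if i = j then w $ i else 0) * v $ j)"
    by (simp add: diagm_def matrix_vector_mult_def)
  also have "\<dots> = w $ i * v $ i"
  proof -
    have "(\<Sum>j\<in>UNIV. (if i = j then w $ i else 0) * v $ j) = (\<Sum>j\<in>UNIV. if i = j then w $ i * v $ j else 0)"
      by (rule sum.cong) auto
    then show ?thesis by simp
  qed
  finally show ?thesis .
qed

lemma transpose_diagm: "transpose (diagm w) = diagm w"
  by (simp add: diagm_def transpose_def vec_eq_iff)

lemma mv_row: "(Z *v x) $ i = Z $ i \<bullet> x"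
  by (simp add: matrix_vector_mult_def inner_vec_def mult.commute)

lemma dot_diagm: "u \<bullet> (diagm w *v v) = (\<Sum>i\<in>UNIV. w $ i * u $ i * v $ i)"
  by (simp add: inner_vec_def diagm_mv mult_ac)

lemma ls_pinv:
  fixes Z :: "real^'q^'r" and w y :: "real^'r"
  assumes wn: "\<forall>i. 0 \<le> w $ i"
  shows "(\<Sum>i\<in>UNIV. w $ i * (y $ i - Z $ i \<bullet> (pinv (transpose Z ** diagm w ** Z) *v (transpose Z *v (diagm w *v y))))\<^sup>2)
         \<le> (\<Sum>i\<in>UNIV. w $ i * (y $ i - Z $ i \<bullet> x)\<^sup>2)"
proof -
  define A where "A = transpose Z ** diagm w ** Z"
  define b where "b = transpose Z *v (diagm w *v y)"
  define G where "G = pinv A"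
  define xs where "xs = G *v b"
  have symA: "transpose A = A"
    by (simp add: A_def matrix_transpose_mul transpose_diagm transpose_transpose matrix_mul_assoc)
  note PP = pinv_props[OF symA, folded G_def]
  have Av: "A *v u = transpose Z *v (diagm w *v (Z *v u))" for u
    by (simp add: A_def matrix_vector_mul_assoc matrix_mul_assoc)
  have quad: "u \<bullet> (A *v u) = (\<Sum>i\<in>UNIV. w $ i * ((Z *v u) $ i)\<^sup>2)" for u
    unfolding Av by (subst dot_mv_transpose[symmetric]) (simp add: dot_diagm power2_eq_square mult_ac)
  define z where "z = b - A *v (G *v b)"
  have zorth: "z \<bullet> (A *v u) = 0" for u
  proof -
    have "(A *v (G *v b)) \<bullet> (A *v u) = b \<bullet> ((A ** G) *v (A *v u))"
    proof -
      have "(A *v (G *v b)) \<bullet> (A *v u) = ((A ** G) *v b) \<bullet> (A *v u)"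
        by (simp add: matrix_vector_mul_assoc)
      also have "\<dots> = b \<bullet> (transpose (A ** G) *v (A *v u))" by (rule dot_mv_transpose)
      finally show ?thesis using PP by simp
    qed
    also have "(A ** G) *v (A *v u) = A *v u"
      using PP by (simp add: matrix_vector_mul_assoc)
    finally show ?thesis by (simp add: z_def inner_diff_left)
  qed
  have Az: "A *v z = 0"
  proof -
    have "(A *v z) \<bullet> (A *v z) = z \<bullet> (A *v (A *v z))"
      using dot_mv_transpose[of A z] symA by simp
    then show ?thesis using zorth by simp
  qed
  have "(\<Sum>i\<in>UNIV. w $ i * ((Z *v z) $ i)\<^sup>2) = 0" using quad[of z] Az by simp
  then have wz: "w $ i * ((Z *v z) $ i)\<^sup>2 = 0" for i
    using sum_nonneg_eq_0_iff[of UNIV "\<lambda>i. w $ i * ((Z *v z) $ i)\<^sup>2"] wn by auto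
  have wz': "w $ i * (Z *v z) $ i = 0" for i
    using wz[of i] by (auto simp: power2_eq_square)
  have zb: "z \<bullet> b = 0"
    unfolding b_def by (subst dot_mv_transpose[symmetric]) (simp add: dot_diagm wz' mult_ac)
  have "z \<bullet> z = z \<bullet> b - z \<bullet> (A *v (G *v b))"
    by (simp add: z_def inner_diff_right)
  also have "\<dots> = 0" using zb zorth by simp
  finally have "z = 0" by simp
  then have Axs: "A *v xs = b" by (simp add: xs_def z_def)
  define d where "d = x - xs"
  define e where "e = y - Z *v xs"
  have cross: "(\<Sum>i\<in>UNIV. w $ i * e $ i * (Z *v d) $ i) = 0"
  proof -
    have "(\<Sum>i\<in>UNIV. w $ i * e $ i * (Z *v d) $ i) = (Z *v d) \<bullet> (diagm w *v e)"
      by (simp add: dot_diagm mult_ac)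
    also have "\<dots> = d \<bullet> (transpose Z *v (diagm w *v e))" by (rule dot_mv_transpose)
    also have "transpose Z *v (diagm w *v e) = b - A *v xs"
      by (simp add: e_def b_def Av matrix_vector_mult_diff_distrib)
    finally show ?thesis using Axs by simp
  qed
  have xrow: "y $ i - Z $ i \<bullet> x = e $ i - (Z *v d) $ i" for i
    by (simp add: e_def d_def mv_row inner_diff_right)
  have "(\<Sum>i\<in>UNIV. w $ i * (y $ i - Z $ i \<bullet> x)\<^sup>2)
      = (\<Sum>i\<in>UNIV. w $ i * (e $ i)\<^sup>2) - 2 * (\<Sum>i\<in>UNIV. w $ i * e $ i * (Z *v d) $ i)
        + (\<Sum>i\<in>UNIV. w $ i * ((Z *v d) $ i)\<^sup>2)"
    by (simp add: xrow power2_eq_square algebra_simps sum.distrib sum_subtractf sum_distrib_left)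
  also have "\<dots> \<ge> (\<Sum>i\<in>UNIV. w $ i * (e $ i)\<^sup>2)"
    using cross wn by (simp add: sum_nonneg)
  finally show ?thesis
    by (simp add: e_def mv_row xs_def G_def A_def b_def)
qed



lemma mean_min:
  fixes w a :: "'i \<Rightarrow> real" and I :: "'i set"
  assumes "finite I" "\<forall>i\<in>I. 0 \<le> w i" "sum w I > 0"
  shows "(\<Sum>i\<in>I. w i * (a i - (\<Sum>i\<in>I. w i * a i) / sum w I)\<^sup>2) \<le> (\<Sum>i\<in>I. w i * (a i - m)\<^sup>2)"
proof -
  define S where "S = sum w I"
  define ms where "ms = (\<Sum>i\<in>I. w i * a i) / S"
  have c: "(\<Sum>i\<in>I. w i * (a i - ms)) = 0"
  proof -
    have "(\<Sum>i\<in>I. w i * (a i - ms)) = (\<Sum>i\<in>I. w i * a i) - ms * S"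
      by (simp add: right_diff_distrib sum_subtractf sum_distrib_left S_def mult.commute)
    also have "ms * S = (\<Sum>i\<in>I. w i * a i)" using assms(3) by (simp add: ms_def S_def)
    finally show ?thesis by simp
  qed
  have "(\<Sum>i\<in>I. w i * (a i - m)\<^sup>2) = (\<Sum>i\<in>I. w i * (a i - ms)\<^sup>2)
        + 2 * (ms - m) * (\<Sum>i\<in>I. w i * (a i - ms)) + (ms - m)\<^sup>2 * S"
  proof -
    have "(\<Sum>i\<in>I. w i * (a i - m)\<^sup>2) = (\<Sum>i\<in>I. w i * (a i - ms)\<^sup>2 + 2 * (ms - m) * (w i * (a i - ms)) + (ms - m)\<^sup>2 * w i)"
      by (rule sum.cong) (simp_all add: power2_eq_square algebra_simps)
    also have "\<dots> = (\<Sum>i\<in>I. w i * (a i - ms)\<^sup>2) + 2 * (ms - m) * (\<Sum>i\<in>I. w i * (a i - ms)) + (ms - m)\<^sup>2 * S"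
      by (simp add: sum.distrib sum_distrib_left S_def)
    finally show ?thesis .
  qed
  also have "\<dots> \<ge> (\<Sum>i\<in>I. w i * (a i - ms)\<^sup>2)"
    using c assms(3) by (simp add: S_def)
  finally show ?thesis by (simp add: ms_def S_def)
qed

lemma mrow_pos:
  assumes "\<exists>j. M $ i $ j"
  shows "mrow M i \<ge> 1"
proof -
  obtain j where j: "M $ i $ j" using assms by blast
  have "mind M i j \<le> mrow M i"
    unfolding mrow_def by (rule member_le_sum) (auto simp: mind_def)
  then show ?thesis using j by (simp add: mind_def)
qed

lemma mind_nonneg: "0 \<le> mind M i j" by (simp add: mind_def)

lemma major:
  fixes X :: "real^'p^'n" and M :: "bool^'p^'n"
    and s1 :: "real^'p" and s2 :: real
    and V V' :: "real^'q^'p" and U U' :: "real^'q^'n" and mu mu' :: "real^'p"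
  assumes adm1: "rho_adm P1" and adm2: "rho_adm P2"
    and s1: "\<forall>j. s1 $ j > 0" and s2: "s2 > 0"
    and rows: "\<forall>i. \<exists>j. M $ i $ j"
    and LS: "(\<Sum>i\<in>UNIV. \<Sum>j\<in>UNIV. Wmat P1 P2 s1 s2 X M V U mu $ i $ j * (resid X V' U' mu' i j)\<^sup>2)
           \<le> (\<Sum>i\<in>UNIV. \<Sum>j\<in>UNIV. Wmat P1 P2 s1 s2 X M V U mu $ i $ j * (resid X V U mu i j)\<^sup>2)"
  shows "objL P1 P2 s1 s2 X M V' U' mu' \<le> objL P1 P2 s1 s2 X M V U mu"
proof -
  define r where "r i j = resid X V U mu i j" for i j
  define r' where "r' i j = resid X V' U' mu' i j" for i j
  define W where "W = Wmat P1 P2 s1 s2 X M V U mu"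
  define T where "T i = (1 / mrow M i) * (\<Sum>j\<in>UNIV. mind M i j * (s1 $ j)\<^sup>2 * rho_fn P1 (r i j / s1 $ j))" for i
  define T' where "T' i = (1 / mrow M i) * (\<Sum>j\<in>UNIV. mind M i j * (s1 $ j)\<^sup>2 * rho_fn P1 (r' i j / s1 $ j))" for i
  define w1 where "w1 i j = w_fn P1 (r i j / s1 $ j)" for i j
  define w2 where "w2 i = w_fn P2 (rt P1 s1 X M V U mu i / s2)" for i
  have mpos: "mrow M i > 0" for i using mrow_pos[of M i] rows by force
  have T0: "T i \<ge> 0" "T' i \<ge> 0" for i
  proof -
    have "0 \<le> (\<Sum>j\<in>UNIV. mind M i j * (s1 $ j)\<^sup>2 * rho_fn P1 (r i j / s1 $ j))"
      by (intro sum_nonneg mult_nonneg_nonneg rho_nonneg[OF adm1] mind_nonneg zero_le_power2)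
    moreover have "0 \<le> (\<Sum>j\<in>UNIV. mind M i j * (s1 $ j)\<^sup>2 * rho_fn P1 (r' i j / s1 $ j))"
      by (intro sum_nonneg mult_nonneg_nonneg rho_nonneg[OF adm1] mind_nonneg zero_le_power2)
    ultimately show "T i \<ge> 0" "T' i \<ge> 0" unfolding T_def T'_def using mpos[of i] by simp_all
  qed
  have rtT: "rt P1 s1 X M V U mu i = sqrt (T i)" "rt P1 s1 X M V' U' mu' i = sqrt (T' i)" for i
    by (simp_all add: rt_def T_def T'_def r_def r'_def)
  have Wij: "W $ i $ j = w2 i * (mind M i j * w1 i j)" for i j
    by (simp add: W_def Wmat_def w1_def w2_def r_def mult_ac)
  have w2n: "0 \<le> w2 i" for i unfolding w2_def by (rule w_nonneg[OF adm2])
  have w1n: "0 \<le> w1 i j" for i j unfolding w1_def by (rule w_nonneg[OF adm1])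
  have h1: "mind M i j * (s1 $ j)\<^sup>2 * rho_fn P1 (r' i j / s1 $ j)
        \<le> mind M i j * (s1 $ j)\<^sup>2 * rho_fn P1 (r i j / s1 $ j)
          + mind M i j * w1 i j / 2 * ((r' i j)\<^sup>2 - (r i j)\<^sup>2)" for i j
  proof -
    have sj: "s1 $ j \<noteq> 0" using s1 by (metis less_irrefl)
    have "mind M i j * (s1 $ j)\<^sup>2 * rho_fn P1 (r' i j / s1 $ j)
       \<le> mind M i j * (s1 $ j)\<^sup>2 * (rho_fn P1 (r i j / s1 $ j)
           + w1 i j / 2 * ((r' i j / s1 $ j)\<^sup>2 - (r i j / s1 $ j)\<^sup>2))"
      unfolding w1_def by (intro mult_left_mono tangent[OF adm1]) (auto simp: mind_def)
    also have "\<dots> = mind M i j * (s1 $ j)\<^sup>2 * rho_fn P1 (r i j / s1 $ j)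
          + mind M i j * w1 i j / 2 * ((r' i j)\<^sup>2 - (r i j)\<^sup>2)"
      using sj by (simp add: field_simps power2_eq_square)
    finally show ?thesis .
  qed
  have h2: "T' i \<le> T i + (1 / mrow M i) * (\<Sum>j\<in>UNIV. mind M i j * w1 i j / 2 * ((r' i j)\<^sup>2 - (r i j)\<^sup>2))" for i
  proof -
    have "(\<Sum>j\<in>UNIV. mind M i j * (s1 $ j)\<^sup>2 * rho_fn P1 (r' i j / s1 $ j))
        \<le> (\<Sum>j\<in>UNIV. mind M i j * (s1 $ j)\<^sup>2 * rho_fn P1 (r i j / s1 $ j))
          + (\<Sum>j\<in>UNIV. mind M i j * w1 i j / 2 * ((r' i j)\<^sup>2 - (r i j)\<^sup>2))"
      unfolding sum.distrib[symmetric] by (rule sum_mono) (rule h1)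
    then have "(1 / mrow M i) * (\<Sum>j\<in>UNIV. mind M i j * (s1 $ j)\<^sup>2 * rho_fn P1 (r' i j / s1 $ j))
        \<le> (1 / mrow M i) * ((\<Sum>j\<in>UNIV. mind M i j * (s1 $ j)\<^sup>2 * rho_fn P1 (r i j / s1 $ j))
          + (\<Sum>j\<in>UNIV. mind M i j * w1 i j / 2 * ((r' i j)\<^sup>2 - (r i j)\<^sup>2)))"
      using mpos[of i] by (intro mult_left_mono) auto
    then show ?thesis by (simp add: T_def T'_def distrib_left)
  qed
  define D where "D i = (\<Sum>j\<in>UNIV. W $ i $ j * ((r' i j)\<^sup>2 - (r i j)\<^sup>2))" for i
  have row: "mrow M i * rho_fn P2 (sqrt (T' i) / s2)
      \<le> mrow M i * rho_fn P2 (sqrt (T i) / s2) + D i / (4 * s2\<^sup>2)" for i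
  proof -
    have t: "rho_fn P2 (sqrt (T' i) / s2) \<le> rho_fn P2 (sqrt (T i) / s2)
        + w2 i / 2 * ((sqrt (T' i) / s2)\<^sup>2 - (sqrt (T i) / s2)\<^sup>2)"
      using tangent[OF adm2] unfolding w2_def rtT by blast
    have sq: "(sqrt (T' i) / s2)\<^sup>2 - (sqrt (T i) / s2)\<^sup>2 = (T' i - T i) / s2\<^sup>2"
      using T0[of i] by (simp add: power_divide diff_divide_distrib)
    have "w2 i / 2 * ((T' i - T i) / s2\<^sup>2)
        \<le> w2 i / 2 * (((1 / mrow M i) * (\<Sum>j\<in>UNIV. mind M i j * w1 i j / 2 * ((r' i j)\<^sup>2 - (r i j)\<^sup>2))) / s2\<^sup>2)"
      using h2[of i] w2n[of i] s2 by (intro mult_left_mono divide_right_mono) auto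
    also have "\<dots> = D i / (4 * s2\<^sup>2) / mrow M i"
      using mpos[of i] s2
      by (simp add: D_def Wij sum_distrib_left sum_divide_distrib field_simps)
    finally have "rho_fn P2 (sqrt (T' i) / s2) \<le> rho_fn P2 (sqrt (T i) / s2) + D i / (4 * s2\<^sup>2) / mrow M i"
      using t sq by simp
    then have "mrow M i * rho_fn P2 (sqrt (T' i) / s2)
        \<le> mrow M i * (rho_fn P2 (sqrt (T i) / s2) + D i / (4 * s2\<^sup>2) / mrow M i)"
      using mpos[of i] by (intro mult_left_mono) auto
    then show ?thesis using mpos[of i] by (simp add: distrib_left)
  qed
  have Dsum: "(\<Sum>i\<in>UNIV. D i) \<le> 0"
    using LS by (simp add: D_def W_def r_def r'_def right_diff_distrib sum_subtractf)
  have "(\<Sum>i\<in>UNIV. mrow M i * rho_fn P2 (sqrt (T' i) / s2))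
      \<le> (\<Sum>i\<in>UNIV. mrow M i * rho_fn P2 (sqrt (T i) / s2) + D i / (4 * s2\<^sup>2))"
    by (rule sum_mono) (rule row)
  also have "\<dots> = (\<Sum>i\<in>UNIV. mrow M i * rho_fn P2 (sqrt (T i) / s2)) + (\<Sum>i\<in>UNIV. D i) / (4 * s2\<^sup>2)"
    by (simp add: sum.distrib sum_divide_distrib)
  also have "\<dots> \<le> (\<Sum>i\<in>UNIV. mrow M i * rho_fn P2 (sqrt (T i) / s2))"
    using Dsum s2 by (simp add: divide_nonpos_pos)
  finally have main: "(\<Sum>i\<in>UNIV. mrow M i * rho_fn P2 (sqrt (T' i) / s2))
      \<le> (\<Sum>i\<in>UNIV. mrow M i * rho_fn P2 (sqrt (T i) / s2))" .
  have mt: "0 \<le> mtot M" unfolding mtot_def using mpos by (simp add: sum_nonneg less_imp_le)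
  show ?thesis
    unfolding objL_def rtT using mult_left_mono[OF main, of "s2\<^sup>2 / mtot M"] mt by simp
qed



lemma mmt_entry: "(A ** transpose B) $ i $ j = A $ i \<bullet> B $ j"
  by (simp add: matrix_matrix_mult_def transpose_def inner_vec_def)

lemma step_LS:
  fixes X :: "real^'p^'n" and M :: "bool^'p^'n"
    and s1 :: "real^'p" and s2 :: real
    and V V' :: "real^'q^'p" and U U' :: "real^'q^'n" and mu mu' :: "real^'p"
  assumes adm1: "rho_adm P1" and adm2: "rho_adm P2"
    and den: "\<forall>j. (\<Sum>i\<in>UNIV. Wmat P1 P2 s1 s2 X M V U mu $ i $ j) > 0"
    and st: "step P1 P2 s1 s2 X M (V, U, mu) = (V', U', mu')"
  shows "(\<Sum>i\<in>UNIV. \<Sum>j\<in>UNIV. Wmat P1 P2 s1 s2 X M V U mu $ i $ j * (resid X V' U' mu' i j)\<^sup>2)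
           \<le> (\<Sum>i\<in>UNIV. \<Sum>j\<in>UNIV. Wmat P1 P2 s1 s2 X M V U mu $ i $ j * (resid X V U mu i j)\<^sup>2)"
proof -
  define W where "W = Wmat P1 P2 s1 s2 X M V U mu"
  define Wt where "Wt = Wtmat P1 s1 X M V U mu"
  define wr where "wr i = w_fn P2 (rt P1 s1 X M V U mu i / s2)" for i
  have WWt: "W $ i $ j = wr i * Wt $ i $ j" for i j
    by (simp add: W_def Wt_def Wmat_def Wtmat_def wr_def mult_ac)
  have wrn: "0 \<le> wr i" for i unfolding wr_def by (rule w_nonneg[OF adm2])
  have Wtn: "0 \<le> Wt $ i $ j" for i j
    by (simp add: Wt_def Wtmat_def w_nonneg[OF adm1] mind_nonneg)
  have Wn: "0 \<le> W $ i $ j" for i j using WWt wrn Wtn by simp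
  have V'd: "V' = (\<chi> j. pinv (transpose U ** diagm (column j W) ** U)
                    *v (transpose U *v (diagm (column j W) *v (column j X - vec (mu $ j)))))"
    using st by (simp add: step_def Let_def W_def)
  have U'd: "U' = (\<chi> i. pinv (transpose V' ** diagm (Wt $ i) ** V')
                    *v (transpose V' *v (diagm (Wt $ i) *v (X $ i - mu))))"
    using st by (simp add: step_def Let_def Wt_def V'd W_def)
  have mu'd: "mu' = (\<chi> j. (\<Sum>i\<in>UNIV. W $ i $ j * (X $ i $ j - (U' ** transpose V') $ i $ j))
                      / (\<Sum>i\<in>UNIV. W $ i $ j))"
    using st by (simp add: step_def Let_def Wt_def V'd U'd W_def)
  define Lt where "Lt (A::real^'q^'p) (B::real^'q^'n) C = (\<Sum>i\<in>UNIV. \<Sum>j\<in>UNIV. W $ i $ j * (resid X A B C i j)\<^sup>2)" for A B C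
  have a: "(\<Sum>i\<in>UNIV. W $ i $ j * (resid X V' U mu i j)\<^sup>2) \<le> (\<Sum>i\<in>UNIV. W $ i $ j * (resid X V U mu i j)\<^sup>2)" for j
  proof -
    have "(\<Sum>i\<in>UNIV. column j W $ i * ((column j X - vec (mu $ j)) $ i - U $ i \<bullet> (pinv (transpose U ** diagm (column j W) ** U)
                    *v (transpose U *v (diagm (column j W) *v (column j X - vec (mu $ j))))))\<^sup>2)
        \<le> (\<Sum>i\<in>UNIV. column j W $ i * ((column j X - vec (mu $ j)) $ i - U $ i \<bullet> V $ j)\<^sup>2)"
      by (rule ls_pinv) (simp add: column_def Wn)
    then show ?thesis
      by (simp add: V'd column_def resid_def algebra_simps)
  qed
  have b: "(\<Sum>j\<in>UNIV. W $ i $ j * (resid X V' U' mu i j)\<^sup>2) \<le> (\<Sum>j\<in>UNIV. W $ i $ j * (resid X V' U mu i j)\<^sup>2)" for i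
  proof -
    have "(\<Sum>j\<in>UNIV. Wt $ i $ j * ((X $ i - mu) $ j - V' $ j \<bullet> (pinv (transpose V' ** diagm (Wt $ i) ** V')
                    *v (transpose V' *v (diagm (Wt $ i) *v (X $ i - mu)))))\<^sup>2)
        \<le> (\<Sum>j\<in>UNIV. Wt $ i $ j * ((X $ i - mu) $ j - V' $ j \<bullet> U $ i)\<^sup>2)"
      by (rule ls_pinv) (simp add: Wtn)
    then have "(\<Sum>j\<in>UNIV. Wt $ i $ j * (resid X V' U' mu i j)\<^sup>2) \<le> (\<Sum>j\<in>UNIV. Wt $ i $ j * (resid X V' U mu i j)\<^sup>2)"
      by (simp add: U'd resid_def algebra_simps inner_commute)
    then have "wr i * (\<Sum>j\<in>UNIV. Wt $ i $ j * (resid X V' U' mu i j)\<^sup>2) \<le> wr i * (\<Sum>j\<in>UNIV. Wt $ i $ j * (resid X V' U mu i j)\<^sup>2)"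
      by (rule mult_left_mono) (rule wrn)
    then show ?thesis by (simp add: WWt sum_distrib_left mult_ac)
  qed
  have c: "(\<Sum>i\<in>UNIV. W $ i $ j * (resid X V' U' mu' i j)\<^sup>2) \<le> (\<Sum>i\<in>UNIV. W $ i $ j * (resid X V' U' mu i j)\<^sup>2)" for j
  proof -
    have "(\<Sum>i\<in>UNIV. W $ i $ j * ((X $ i $ j - U' $ i \<bullet> V' $ j) - (\<Sum>i\<in>UNIV. W $ i $ j * (X $ i $ j - U' $ i \<bullet> V' $ j)) / (\<Sum>i\<in>UNIV. W $ i $ j))\<^sup>2)
        \<le> (\<Sum>i\<in>UNIV. W $ i $ j * ((X $ i $ j - U' $ i \<bullet> V' $ j) - mu $ j)\<^sup>2)"
      by (rule mean_min) (use Wn den in \<open>auto simp: W_def\<close>)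
    then show ?thesis
      by (simp add: mu'd mmt_entry resid_def algebra_simps)
  qed
  have "Lt V' U' mu' \<le> Lt V' U' mu"
    unfolding Lt_def by (subst (1 2) sum.swap) (rule sum_mono, rule c)
  also have "\<dots> \<le> Lt V' U mu"
    unfolding Lt_def by (rule sum_mono, rule b)
  also have "\<dots> \<le> Lt V U mu"
    unfolding Lt_def by (subst (1 2) sum.swap) (rule sum_mono, rule a)
  finally show ?thesis by (simp add: Lt_def W_def)
qed


theorem proposition1:
  fixes X :: "real^'p^'n" and M :: "bool^'p^'n"
    and s1 :: "real^'p" and s2 :: real
    and P1 P2 :: "real \<times> real \<times> real \<times> real"
    and V0 :: "real^'q^'p" and U0 :: "real^'q^'n" and mu0 :: "real^'p"
  assumes "CARD('q) < CARD('p)"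
    and "rho_adm P1" and "rho_adm P2"
    and "\<forall>j. s1 $ j > 0" and "s2 > 0"
    and "\<forall>i. \<exists>j. M $ i $ j"
    and "\<forall>k j. (case iterate P1 P2 s1 s2 X M (V0, U0, mu0) k of (V, U, mu) \<Rightarrow>
                  (\<Sum>i\<in>UNIV. Wmat P1 P2 s1 s2 X M V U mu $ i $ j) > 0)"
  shows "\<forall>k. (case iterate P1 P2 s1 s2 X M (V0, U0, mu0) (Suc k) of (V, U, mu) \<Rightarrow>
                objL P1 P2 s1 s2 X M V U mu)
           \<le> (case iterate P1 P2 s1 s2 X M (V0, U0, mu0) k of (V, U, mu) \<Rightarrow>
                objL P1 P2 s1 s2 X M V U mu)"
proof
  fix k
  obtain V U mu where S: "iterate P1 P2 s1 s2 X M (V0, U0, mu0) k = (V, U, mu)"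
    by (metis prod_cases3)
  obtain V' U' mu' where S': "step P1 P2 s1 s2 X M (V, U, mu) = (V', U', mu')"
    by (metis prod_cases3)
  have S2: "iterate P1 P2 s1 s2 X M (V0, U0, mu0) (Suc k) = (V', U', mu')"
    using S S' by (simp add: iterate_def)
  have den: "\<forall>j. (\<Sum>i\<in>UNIV. Wmat P1 P2 s1 s2 X M V U mu $ i $ j) > 0"
    using assms(7) S by (metis (mono_tags, lifting) case_prod_conv)
  have "objL P1 P2 s1 s2 X M V' U' mu' \<le> objL P1 P2 s1 s2 X M V U mu"
    by (rule major[OF assms(2-6) step_LS[OF assms(2,3) den S']])
  then show "(case iterate P1 P2 s1 s2 X M (V0, U0, mu0) (Suc k) of (V, U, mu) \<Rightarrow>
                objL P1 P2 s1 s2 X M V U mu)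
           \<le> (case iterate P1 P2 s1 s2 X M (V0, U0, mu0) k of (V, U, mu) \<Rightarrow>
                objL P1 P2 s1 s2 X M V U mu)"
    using S S2 by simp
qed

end
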